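(* Let $K\ge 2$ be an integer, let $\boldsymbol{\alpha}=(\alpha_1,\dots,\alpha_K)$ with $\alpha_k\ge 1$ for all $k$ (equivalently $\alpha_k=e_k+1$ with evidence $e_k\ge 0$), let $S=\sum_{k=1}^K\alpha_k$, and let $\mathbf p\sim\mathrm{Dir}(\boldsymbol\alpha)$, $y\mid\mathbf p\sim\mathrm{Cat}(\mathbf p)$. With the uncertainty measures $u_v,u_{diss},u_{alea},u_{epis},u_{en}$ defined in the context, the following hold. 1. For every such $\boldsymbol\alpha$: (a) $u_v+u_{diss}\le 1$; (b) $u_v>u_{epis}$. 2. (a) If $\boldsymbol\alpha=(1,\dots,1)$, then $1=u_v=u_{en}>u_{alea}>u_{epis}>u_{diss}=0$. (b) If $\alpha_1=\alpha_2=\cdots=\alpha_K$, then $u_{en}=1$, and as $S\to\infty$ we have $u_{diss}\to 1$, $u_{alea}\to 1$, $u_v\to 0$, $u_{epis}\to 0$; moreover, for all sufficiently large $S$, $u_{en}>u_{alea}>u_{diss}>u_v>u_{epis}$.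
   Context: Subjective-logic opinion associated with $\boldsymbol\alpha$ (base rates $1/K$, non-informative weight $W=K$): belief masses $b_k=(\alpha_k-1)/S$ and vacuity $u_v=K/S$, so $\sum_k b_k+u_v=1$. Dissonance: $u_{diss}=\sum_{k=1}^K \frac{b_k\sum_{j\ne k} b_j\,\mathrm{Bal}(b_j,b_k)}{\sum_{j\ne k} b_j}$, where $\mathrm{Bal}(b_j,b_k)=1-\frac{|b_j-b_k|}{b_j+b_k}$ if $b_jb_k\neq 0$ and $\mathrm{Bal}(b_j,b_k)=0$ if $\min(b_j,b_k)=0$; a summand whose denominator $\sum_{j\ne k}b_j$ is $0$ is taken to be $0$. Let $H_K(\mathbf q)=-\sum_{k=1}^K q_k\log_K q_k$ (entropy with logarithm base $K$). Entropy: $u_{en}=H_K(\mathbb E[\mathbf p])$ where $\mathbb E[\mathbf p]=\boldsymbol\alpha/S$. Aleatoric uncertainty: $u_{alea}=\mathbb E_{\mathbf p\sim\mathrm{Dir}(\boldsymbol\alpha)}[H_K(\mathbf p)]$. Epistemic uncertainty (mutual information between $y$ and $\mathbf p$): $u_{epis}=u_{en}-u_{alea}$. *)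

theory Defs
  imports "HOL-Analysis.Analysis"
begin

text \<open>Concentration parameters are functions alpha :: nat => real; only the
  values at indices 0..K-1 (i.e. k < K) matter.\<close>

definition Ssum :: "nat \<Rightarrow> (nat \<Rightarrow> real) \<Rightarrow> real" where
  "Ssum K \<alpha> = (\<Sum>k<K. \<alpha> k)"

definition belief :: "nat \<Rightarrow> (nat \<Rightarrow> real) \<Rightarrow> nat \<Rightarrow> real" where
  "belief K \<alpha> k = (\<alpha> k - 1) / Ssum K \<alpha>"

definition u_v :: "nat \<Rightarrow> (nat \<Rightarrow> real) \<Rightarrow> real" where
  "u_v K \<alpha> = real K / Ssum K \<alpha>"

definition Bal :: "real \<Rightarrow> real \<Rightarrow> real" where
  "Bal x y = (if x * y \<noteq> 0 then 1 - \<bar>x - y\<bar> / (x + y) else 0)"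

definition u_diss :: "nat \<Rightarrow> (nat \<Rightarrow> real) \<Rightarrow> real" where
  "u_diss K \<alpha> = (\<Sum>k<K.
     (let b = belief K \<alpha>; D = (\<Sum>j\<in>{..<K} - {k}. b j) in
      if D = 0 then 0
      else b k * (\<Sum>j\<in>{..<K} - {k}. b j * Bal (b j) (b k)) / D))"

text \<open>Entropy with logarithm base K (note log K 0 = 0, so 0 log 0 = 0).\<close>
definition H :: "nat \<Rightarrow> (nat \<Rightarrow> real) \<Rightarrow> real" where
  "H K q = - (\<Sum>k<K. q k * log (real K) (q k))"

definition u_en :: "nat \<Rightarrow> (nat \<Rightarrow> real) \<Rightarrow> real" where
  "u_en K \<alpha> = H K (\<lambda>k. \<alpha> k / Ssum K \<alpha>)"

text \<open>Dirichlet distribution, via its standard density on the simplex,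
  parametrised by the first K-1 coordinates (p_{K-1} = 1 - sum of the others).\<close>

definition dir_extend :: "nat \<Rightarrow> (nat \<Rightarrow> real) \<Rightarrow> nat \<Rightarrow> real" where
  "dir_extend K q = (\<lambda>k. if k < K - 1 then q k else 1 - (\<Sum>j<K - 1. q j))"

definition dir_simplex :: "nat \<Rightarrow> (nat \<Rightarrow> real) set" where
  "dir_simplex K = {q. (\<forall>k<K - 1. 0 \<le> q k) \<and> (\<Sum>j<K - 1. q j) \<le> 1}"

definition dir_density :: "nat \<Rightarrow> (nat \<Rightarrow> real) \<Rightarrow> (nat \<Rightarrow> real) \<Rightarrow> real" where
  "dir_density K \<alpha> p =
     Gamma (Ssum K \<alpha>) / (\<Prod>k<K. Gamma (\<alpha> k)) * (\<Prod>k<K. p k powr (\<alpha> k - 1))"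

definition dir_expect :: "nat \<Rightarrow> (nat \<Rightarrow> real) \<Rightarrow> ((nat \<Rightarrow> real) \<Rightarrow> real) \<Rightarrow> real" where
  "dir_expect K \<alpha> f =
     (\<integral>q. indicator (dir_simplex K) q * dir_density K \<alpha> (dir_extend K q) * f (dir_extend K q)
        \<partial>(PiM {..<K - 1} (\<lambda>_. lborel)))"

definition u_alea :: "nat \<Rightarrow> (nat \<Rightarrow> real) \<Rightarrow> real" where
  "u_alea K \<alpha> = dir_expect K \<alpha> (H K)"

definition u_epis :: "nat \<Rightarrow> (nat \<Rightarrow> real) \<Rightarrow> real" where
  "u_epis K \<alpha> = u_en K \<alpha> - u_alea K \<alpha>"

end

theory Submission
  imports Defs
begin


lemma beta_unit:
  fixes a b :: real assumes "a > 0" "b > 0"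
  shows "(\<integral>\<^sup>+u. ennreal (indicator {0..1} u * (u powr (a-1) * (1-u) powr (b-1))) \<partial>lborel) = ennreal (Beta a b)"
proof -
  have "((\<lambda>u. indicator {0..1} u * (u powr (a-1) * (1-u) powr (b-1))) has_integral Beta a b) UNIV"
  proof -
    have e: "(\<lambda>u. indicator {0..1} u * (u powr (a-1) * (1-u) powr (b-1))) =
      (\<lambda>u. if u \<in> {0..1} then u powr (a-1) * (1-u) powr (b-1) else 0)"
      by (auto simp: indicator_def)
    show ?thesis unfolding e has_integral_restrict_UNIV using has_integral_Beta_real[OF assms] .
  qed
  then show ?thesis
    by (intro nn_integral_has_integral_lborel) (auto simp: indicator_def)
qed

lemma beta_scaled:
  fixes a b s :: real assumes "a > 0" "b > 0" "s > 0"
  shows "(\<integral>\<^sup>+t. ennreal (indicator {0..s} t * (t powr (a-1) * (s-t) powr (b-1))) \<partial>lborel)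
       = ennreal (s powr (a+b-1) * Beta a b)"
proof -
  let ?f = "\<lambda>t. ennreal (indicator {0..s} t * (t powr (a-1) * (s-t) powr (b-1)))"
  have "(\<integral>\<^sup>+t. ?f t \<partial>lborel) = ennreal \<bar>s\<bar> * (\<integral>\<^sup>+u. ?f (0 + s * u) \<partial>lborel)"
    using assms by (subst nn_integral_real_affine[where c = s and t = 0]) auto
  also have "(\<lambda>u. ?f (0 + s * u)) = (\<lambda>u. ennreal (s powr (a + b - 2)) *
      ennreal (indicator {0..1} u * (u powr (a-1) * (1-u) powr (b-1))))"
  proof
    fix u
    show "?f (0 + s * u) = ennreal (s powr (a + b - 2)) *
      ennreal (indicator {0..1} u * (u powr (a-1) * (1-u) powr (b-1)))"
    proof (cases "u \<in> {0..1}")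
      case True
      then have "s * u \<in> {0..s}" using assms by (auto simp: mult_le_cancel_left1)
      moreover have "(s * u) powr (a-1) = s powr (a-1) * u powr (a-1)"
        using True assms by (simp add: powr_mult)
      moreover have "(s - s * u) powr (b-1) = s powr (b-1) * (1-u) powr (b-1)"
        using True assms by (simp add: powr_mult[symmetric] right_diff_distrib)
      moreover have "s powr (a + b - 2) = s powr (a-1) * s powr (b-1)"
        using assms by (simp add: powr_add[symmetric])
      ultimately show ?thesis using True assms
        by (simp add: ennreal_mult'[symmetric] mult_ac)
    next
      case False
      then have "s * u \<notin> {0..s}" using assms
        by (auto simp: zero_le_mult_iff mult_le_cancel_left1)
      then show ?thesis using False by simp
    qed
  qed
  also have "(\<integral>\<^sup>+u. ennreal (s powr (a + b - 2)) *
      ennreal (indicator {0..1} u * (u powr (a-1) * (1-u) powr (b-1))) \<partial>lborel)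
     = ennreal (s powr (a + b - 2)) * ennreal (Beta a b)"
    by (subst nn_integral_cmult) (auto simp: beta_unit[OF assms(1,2)])
  also have "ennreal \<bar>s\<bar> * (ennreal (s powr (a + b - 2)) * ennreal (Beta a b)) = ennreal (s powr (a+b-1) * Beta a b)"
  proof -
    have "\<bar>s\<bar> * s powr (a + b - 2) = s powr (a+b-1)"
      using assms by (simp add: powr_add[symmetric] powr_mult_base)
    moreover have "Beta a b \<ge> 0" using assms by (simp add: Beta_def Gamma_real_pos less_imp_le)
    ultimately show ?thesis by (simp add: ennreal_mult'[symmetric] ennreal_mult[symmetric] mult.assoc[symmetric])
  qed
  finally show ?thesis .
qed



definition simpI :: "nat \<Rightarrow> real \<Rightarrow> (nat \<Rightarrow> real) \<Rightarrow> bool" where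
  "simpI n s q = ((\<forall>k<n. 0 \<le> q k) \<and> (\<Sum>k<n. q k) \<le> s)"

definition FF :: "nat \<Rightarrow> (nat \<Rightarrow> real) \<Rightarrow> real \<Rightarrow> (nat \<Rightarrow> real) \<Rightarrow> real" where
  "FF n a s q = (\<Prod>k<n. q k powr (a k - 1)) * (s - (\<Sum>k<n. q k)) powr (a n - 1)"

definition II :: "nat \<Rightarrow> (nat \<Rightarrow> real) \<Rightarrow> real \<Rightarrow> ennreal" where
  "II n a s = (\<integral>\<^sup>+q. ennreal (indicator {q. simpI n s q} q * FF n a s q) \<partial>PiM {..<n} (\<lambda>_. lborel))"

lemma pred_simpI[measurable]:
  fixes n :: nat
  shows "Measurable.pred (PiM {..<n} (\<lambda>_. lborel::real measure)) (simpI n s)"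
proof -
  have 1: "Measurable.pred (PiM {..<n} (\<lambda>_. lborel::real measure)) (\<lambda>q. \<forall>k\<in>{..<n}. 0 \<le> q k)"
  proof (rule pred_intros_finite)
    fix k assume "k \<in> {..<n}"
    then show "Measurable.pred (PiM {..<n} (\<lambda>_. lborel::real measure)) (\<lambda>q. 0 \<le> q k)"
      by measurable
  qed simp
  have 2: "Measurable.pred (PiM {..<n} (\<lambda>_. lborel::real measure)) (\<lambda>q. (\<Sum>k<n. q k) \<le> s)"
    by (rule pred_le_const) measurable
  show ?thesis unfolding simpI_def using 1 2 by (simp add: lessThan_iff[symmetric] del: lessThan_iff) measurable
qed

lemma meas_FF[measurable]:
  fixes n :: nat
  shows "FF n a s \<in> borel_measurable (PiM {..<n} (\<lambda>_. lborel::real measure))"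
  unfolding FF_def by measurable

lemma meas_G:
  fixes n :: nat
  shows "(\<lambda>q. ennreal (indicator {q. simpI n s q} q * FF n a s q)) \<in> borel_measurable (PiM {..<n} (\<lambda>_. lborel::real measure))"
  by measurable

interpretation PL: product_sigma_finite "\<lambda>_::nat. lborel::real measure"
  by standard

lemma II_formula:
  fixes n :: nat
  shows "\<forall>a s. (\<forall>k<Suc n. a k \<ge> 1) \<longrightarrow> s > 0 \<longrightarrow>
    II n a s = ennreal (s powr ((\<Sum>k<Suc n. a k) - 1) * (\<Prod>k<Suc n. Gamma (a k)) / Gamma (\<Sum>k<Suc n. a k))"
proof (induction n)
  case 0
  show ?case
  proof (intro allI impI)
    fix a :: "nat \<Rightarrow> real" and s :: real
    assume a: "\<forall>k<Suc 0. 1 \<le> a k" and s: "s > 0"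
    have "Gamma (a 0) > 0" using a by (intro Gamma_real_pos) auto
    hence "Gamma (a 0) \<noteq> 0" by simp
    hence "II 0 a s = ennreal (s powr (a 0 - 1))"
      unfolding II_def lessThan_0 using s
      by (subst PL.nn_integral_empty) (auto simp: simpI_def FF_def)
    then show "II 0 a s = ennreal (s powr ((\<Sum>k<Suc 0. a k) - 1) * (\<Prod>k<Suc 0. Gamma (a k)) / Gamma (\<Sum>k<Suc 0. a k))"
      using \<open>Gamma (a 0) \<noteq> 0\<close> by simp
  qed
next
  case (Suc m)
  show ?case
  proof (intro allI impI)
    fix a :: "nat \<Rightarrow> real" and s :: real
    assume a: "\<forall>k<Suc (Suc m). 1 \<le> a k" and s: "s > 0"
    define a' where "a' = a(m := a (Suc m))"
    define A' where "A' = (\<Sum>k<Suc m. a' k)"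
    define C' where "C' = (\<Prod>k<Suc m. Gamma (a' k)) / Gamma A'"
    have a'1: "\<forall>k<Suc m. 1 \<le> a' k" using a by (auto simp: a'_def)
    have A'eq: "A' = (\<Sum>k<m. a k) + a (Suc m)"
      unfolding A'_def a'_def by (simp add: lessThan_Suc)
    have A'pos: "A' \<ge> 1"
    proof -
      have "(\<Sum>k<m. a k) \<ge> 0" using a by (intro sum_nonneg) (smt (verit) lessThan_iff less_SucI)
      thus ?thesis using a A'eq by auto
    qed
    have C'nn: "C' \<ge> 0" unfolding C'_def using a'1 A'pos
      by (intro divide_nonneg_nonneg prod_nonneg) (auto intro!: less_imp_le[OF Gamma_real_pos])
    have IH: "\<And>r. r > 0 \<Longrightarrow> II m a' r = ennreal (r powr (A' - 1) * C')"
      using Suc.IH a'1 unfolding A'_def C'_def by (auto simp: mult.assoc)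
    have IH0: "\<And>r. r < 0 \<Longrightarrow> II m a' r = 0"
    proof -
      fix r :: real assume r: "r < 0"
      have "\<And>q. \<not> simpI m r q"
      proof
        fix q assume "simpI m r q"
        then have "(\<Sum>k<m. q k) \<ge> 0" "(\<Sum>k<m. q k) \<le> r" unfolding simpI_def by (auto intro: sum_nonneg)
        thus False using r by linarith
      qed
      thus "II m a' r = 0" unfolding II_def by simp
    qed
    let ?G = "\<lambda>q. ennreal (indicator {q. simpI (Suc m) s q} q * FF (Suc m) a s q)"
    have split: "?G (x(m := t)) = ennreal (indicator {0..} t * t powr (a m - 1)) *
        ennreal (indicator {q. simpI m (s - t) q} x * FF m a' (s - t) x)" for x t
    proof -
      have s1: "(\<Sum>k<Suc m. (x(m := t)) k) = (\<Sum>k<m. x k) + t"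
        by (simp add: lessThan_Suc)
      have p1: "(\<Prod>k<Suc m. (x(m := t)) k powr (a k - 1)) = (\<Prod>k<m. x k powr (a' k - 1)) * t powr (a m - 1)"
        by (simp add: lessThan_Suc a'_def)
      have i1: "simpI (Suc m) s (x(m := t)) \<longleftrightarrow> 0 \<le> t \<and> simpI m (s - t) x"
        unfolding simpI_def s1 by (auto simp: less_Suc_eq)
      have f1: "FF (Suc m) a s (x(m := t)) = t powr (a m - 1) * FF m a' (s - t) x"
        unfolding FF_def s1 p1 by (simp add: a'_def algebra_simps)
      show ?thesis unfolding f1 indicator_def mem_Collect_eq i1
        by (auto simp: ennreal_mult'[symmetric] mult_ac)
    qed
    have "II (Suc m) a s = (\<integral>\<^sup>+t. (\<integral>\<^sup>+x. ?G (x(m := t)) \<partial>PiM {..<m} (\<lambda>_. lborel)) \<partial>lborel)"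
      unfolding II_def lessThan_Suc
      by (rule PL.product_nn_integral_insert_rev) (auto simp: lessThan_Suc[symmetric] intro: meas_G)
    also have "\<dots> = (\<integral>\<^sup>+t. ennreal (indicator {0..} t * t powr (a m - 1)) * II m a' (s - t) \<partial>lborel)"
      unfolding split II_def by (subst nn_integral_cmult) (auto intro: meas_G)
    also have "\<dots> = (\<integral>\<^sup>+t. ennreal C' * ennreal (indicator {0..s} t * (t powr (a m - 1) * (s - t) powr (A' - 1))) \<partial>lborel)"
    proof (rule nn_integral_cong_AE)
      show "AE t in lborel. ennreal (indicator {0..} t * t powr (a m - 1)) * II m a' (s - t) =
          ennreal C' * ennreal (indicator {0..s} t * (t powr (a m - 1) * (s - t) powr (A' - 1)))"
        using AE_lborel_singleton[of s]
      proof (rule eventually_mono)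
        fix t :: real assume "t \<noteq> s"
        show "ennreal (indicator {0..} t * t powr (a m - 1)) * II m a' (s - t) =
          ennreal C' * ennreal (indicator {0..s} t * (t powr (a m - 1) * (s - t) powr (A' - 1)))"
        proof (cases "t < s")
          case True
          then show ?thesis using IH[of "s - t"] C'nn
            by (auto simp: indicator_def ennreal_mult'[symmetric] mult_ac)
        next
          case False
          then show ?thesis using IH0[of "s - t"] \<open>t \<noteq> s\<close> by (auto simp: indicator_def)
        qed
      qed
    qed
    also have "\<dots> = ennreal C' * ennreal (s powr (a m + A' - 1) * Beta (a m) A')"
    proof -
      have "a m > 0" using a by (metis less_SucI lessI less_le_trans zero_less_one)
      moreover have "A' > 0" using A'pos by linarith
      ultimately show ?thesis using s by (subst nn_integral_cmult) (auto simp: beta_scaled)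
    qed
    also have "\<dots> = ennreal (s powr ((\<Sum>k<Suc (Suc m). a k) - 1) * (\<Prod>k<Suc (Suc m). Gamma (a k)) / Gamma (\<Sum>k<Suc (Suc m). a k))"
    proof -
      have sum: "(\<Sum>k<Suc (Suc m). a k) = a m + A'" using A'eq by simp
      have prodG: "(\<Prod>k<Suc (Suc m). Gamma (a k)) = (\<Prod>k<Suc m. Gamma (a' k)) * Gamma (a m)"
        by (simp add: a'_def)
      have "Gamma A' > 0" using A'pos by (intro Gamma_real_pos) auto
      hence "Gamma A' \<noteq> 0" by simp
      hence "C' * (s powr (a m + A' - 1) * Beta (a m) A') =
         s powr ((\<Sum>k<Suc (Suc m). a k) - 1) * (\<Prod>k<Suc (Suc m). Gamma (a k)) / Gamma (\<Sum>k<Suc (Suc m). a k)"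
        unfolding sum prodG C'_def Beta_def by (simp add: field_simps)
      thus ?thesis using C'nn by (simp add: ennreal_mult'[symmetric])
    qed
    finally show "II (Suc m) a s = ennreal (s powr ((\<Sum>k<Suc (Suc m). a k) - 1) * (\<Prod>k<Suc (Suc m). Gamma (a k)) / Gamma (\<Sum>k<Suc (Suc m). a k))" .
  qed
qed



lemma Gamma_p1: "(x::real) > 0 \<Longrightarrow> Gamma (x + 1) = x * Gamma x"
  by (rule Gamma_plus1) (auto dest: nonpos_Ints_nonpos)

lemma dir_simplex_eq: "dir_simplex (Suc n) = {q. simpI n 1 q}"
  by (auto simp: dir_simplex_def simpI_def)

lemma ext_nonneg:
  assumes "q \<in> dir_simplex (Suc n)" "k < Suc n"
  shows "dir_extend (Suc n) q k \<ge> 0"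
  using assms by (auto simp: dir_simplex_def dir_extend_def)

lemma ext_sum:
  "(\<Sum>k<Suc n. dir_extend (Suc n) q k) = 1"
  by (simp add: dir_extend_def)

lemma DirB:
  fixes \<beta> :: "nat \<Rightarrow> real"
  assumes "\<forall>k<Suc n. \<beta> k \<ge> 1"
  shows "(\<integral>\<^sup>+q. ennreal (indicator (dir_simplex (Suc n)) q *
            (\<Prod>k<Suc n. dir_extend (Suc n) q k powr (\<beta> k - 1))) \<partial>PiM {..<n} (\<lambda>_. lborel))
       = ennreal ((\<Prod>k<Suc n. Gamma (\<beta> k)) / Gamma (\<Sum>k<Suc n. \<beta> k))"
proof -
  have "\<And>q. (\<Prod>k<Suc n. dir_extend (Suc n) q k powr (\<beta> k - 1)) = FF n \<beta> 1 q"
    by (simp add: FF_def dir_extend_def)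
  then have "(\<integral>\<^sup>+q. ennreal (indicator (dir_simplex (Suc n)) q *
            (\<Prod>k<Suc n. dir_extend (Suc n) q k powr (\<beta> k - 1))) \<partial>PiM {..<n} (\<lambda>_. lborel)) = II n \<beta> 1"
    by (simp add: II_def dir_simplex_eq)
  then show ?thesis using II_formula[of n] assms by simp
qed

lemma powr_shift:
  fixes p a :: real assumes "p \<ge> 0" "a \<ge> 1"
  shows "p ^ e * p powr (a - 1) = p powr (a + real e - 1)"
proof (cases "p = 0")
  case True
  then show ?thesis by (cases e) auto
next
  case False
  then have "p > 0" using assms by simp
  then show ?thesis by (simp add: powr_realpow[symmetric] powr_add[symmetric] algebra_simps)
qed

lemma meas_w[measurable]:
  fixes n :: nat
  shows "(\<lambda>q. dir_extend (Suc n) q j) \<in> borel_measurable (PiM {..<n} (\<lambda>_. lborel::real measure))"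
  unfolding dir_extend_def
  by (cases "j < n") auto

lemma meas_ind[measurable]:
  fixes n :: nat
  shows "(\<lambda>q. indicator (dir_simplex (Suc n)) q :: real) \<in> borel_measurable (PiM {..<n} (\<lambda>_. lborel::real measure))"
  unfolding dir_simplex_eq by measurable

lemma meas_dens[measurable]:
  fixes n :: nat
  shows "(\<lambda>q. dir_density (Suc n) \<alpha> (dir_extend (Suc n) q)) \<in> borel_measurable (PiM {..<n} (\<lambda>_. lborel::real measure))"
  unfolding dir_density_def by measurable

lemma Dir_moment:
  fixes \<alpha> :: "nat \<Rightarrow> real" and n :: nat
  assumes a: "\<forall>k<Suc n. \<alpha> k \<ge> 1" and j: "j < Suc n"
  defines "S \<equiv> Ssum (Suc n) \<alpha>"
  shows "has_bochner_integral (PiM {..<n} (\<lambda>_. lborel))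
     (\<lambda>q. indicator (dir_simplex (Suc n)) q * dir_density (Suc n) \<alpha> (dir_extend (Suc n) q) * dir_extend (Suc n) q j ^ e)
     (Gamma (\<alpha> j + real e) * Gamma S / (Gamma (\<alpha> j) * Gamma (S + real e)))"
proof -
  define \<beta> where "\<beta> = \<alpha>(j := \<alpha> j + real e)"
  define c where "c = Gamma S / (\<Prod>k<Suc n. Gamma (\<alpha> k))"
  have Gpos: "\<And>k. k < Suc n \<Longrightarrow> Gamma (\<alpha> k) > 0" using a by (intro Gamma_real_pos) auto
  have Spos: "S > 0" unfolding S_def Ssum_def using a
    by (intro sum_pos) (auto intro: less_le_trans[OF zero_less_one])
  have cpos: "c > 0" unfolding c_def using Spos Gpos by (intro divide_pos_pos prod_pos) auto
  have b1: "\<forall>k<Suc n. \<beta> k \<ge> 1" using a by (auto simp: \<beta>_def)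
  have pw: "indicator (dir_simplex (Suc n)) q * dir_density (Suc n) \<alpha> (dir_extend (Suc n) q) * dir_extend (Suc n) q j ^ e
      = c * (indicator (dir_simplex (Suc n)) q * (\<Prod>k<Suc n. dir_extend (Suc n) q k powr (\<beta> k - 1)))" for q
  proof (cases "q \<in> dir_simplex (Suc n)")
    case True
    have "(\<Prod>k<Suc n. dir_extend (Suc n) q k powr (\<beta> k - 1)) =
          (\<Prod>k<Suc n. (if k = j then dir_extend (Suc n) q k ^ e else 1) * dir_extend (Suc n) q k powr (\<alpha> k - 1))"
    proof (rule prod.cong)
      fix k assume k: "k \<in> {..<Suc n}"
      show "dir_extend (Suc n) q k powr (\<beta> k - 1) =
          (if k = j then dir_extend (Suc n) q k ^ e else 1) * dir_extend (Suc n) q k powr (\<alpha> k - 1)"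
        using powr_shift[OF ext_nonneg[OF True] , of k "\<alpha> k" e] k a
        by (auto simp: \<beta>_def algebra_simps)
    qed simp
    also have "\<dots> = dir_extend (Suc n) q j ^ e * (\<Prod>k<Suc n. dir_extend (Suc n) q k powr (\<alpha> k - 1))"
      using j by (simp add: prod.distrib prod.delta)
    finally show ?thesis using True by (simp add: dir_density_def c_def S_def)
  next
    case False
    then show ?thesis by simp
  qed
  have sb: "(\<Sum>k<Suc n. \<beta> k) = S + real e"
  proof -
    have "(\<Sum>k<Suc n. \<beta> k) = (\<Sum>k<Suc n. \<alpha> k + (if k = j then real e else 0))"
      by (rule sum.cong) (auto simp: \<beta>_def)
    also have "\<dots> = S + real e" using j by (simp add: sum.distrib S_def Ssum_def)
    finally show ?thesis .
  qed
  have pb: "(\<Prod>k<Suc n. Gamma (\<beta> k)) = (\<Prod>k<Suc n. Gamma (\<alpha> k)) * (Gamma (\<alpha> j + real e) / Gamma (\<alpha> j))"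
  proof -
    have "(\<Prod>k<Suc n. Gamma (\<beta> k)) = (\<Prod>k<Suc n. Gamma (\<alpha> k) * (if k = j then Gamma (\<alpha> j + real e) / Gamma (\<alpha> j) else 1))"
    proof (rule prod.cong)
      fix k assume "k \<in> {..<Suc n}"
      then show "Gamma (\<beta> k) = Gamma (\<alpha> k) * (if k = j then Gamma (\<alpha> j + real e) / Gamma (\<alpha> j) else 1)"
        using Gpos[of j] j by (auto simp: \<beta>_def)
    qed simp
    also have "\<dots> = (\<Prod>k<Suc n. Gamma (\<alpha> k)) * (Gamma (\<alpha> j + real e) / Gamma (\<alpha> j))"
      using j by (simp add: prod.distrib prod.delta)
    finally show ?thesis .
  qed
  have val: "c * ((\<Prod>k<Suc n. Gamma (\<beta> k)) / Gamma (\<Sum>k<Suc n. \<beta> k))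
      = Gamma (\<alpha> j + real e) * Gamma S / (Gamma (\<alpha> j) * Gamma (S + real e))"
  proof -
    have "(\<Prod>k<Suc n. Gamma (\<alpha> k)) > 0" using Gpos by (intro prod_pos) auto
    then have P0: "(\<Prod>k<Suc n. Gamma (\<alpha> k)) \<noteq> 0" by (simp only: less_irrefl not_less_iff_gr_or_eq)
    have gen: "\<And>P x y z g :: real. P \<noteq> 0 \<Longrightarrow> g / P * (P * (x / y) / z) = x * g / (y * z)"
      by (simp add: divide_simps)
    show ?thesis unfolding pb sb c_def by (rule gen[OF P0])
  qed
  have nonneg: "0 \<le> (\<Prod>k<Suc n. Gamma (\<beta> k)) / Gamma (\<Sum>k<Suc n. \<beta> k)"
  proof -
    have "(\<Sum>k<Suc n. \<beta> k) > 0" using b1 by (intro sum_pos) (auto intro: less_le_trans[OF zero_less_one])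
    then show ?thesis
      using b1 by (intro divide_nonneg_nonneg prod_nonneg) (auto intro!: less_imp_le[OF Gamma_real_pos] simp del: sum.lessThan_Suc)
  qed
  show ?thesis
  proof (rule has_bochner_integral_nn_integral)
    show "(\<lambda>q. indicator (dir_simplex (Suc n)) q * dir_density (Suc n) \<alpha> (dir_extend (Suc n) q) * dir_extend (Suc n) q j ^ e)
       \<in> borel_measurable (PiM {..<n} (\<lambda>_. lborel))" by measurable
    show "AE q in PiM {..<n} (\<lambda>_. lborel). 0 \<le> indicator (dir_simplex (Suc n)) q * dir_density (Suc n) \<alpha> (dir_extend (Suc n) q) * dir_extend (Suc n) q j ^ e"
      unfolding pw using cpos by (auto intro!: AE_I2 mult_nonneg_nonneg prod_nonneg ext_nonneg simp: indicator_def)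
    show "0 \<le> Gamma (\<alpha> j + real e) * Gamma S / (Gamma (\<alpha> j) * Gamma (S + real e))"
      using val cpos nonneg by (metis mult_nonneg_nonneg less_imp_le)
    have "(\<integral>\<^sup>+q. ennreal (indicator (dir_simplex (Suc n)) q * dir_density (Suc n) \<alpha> (dir_extend (Suc n) q) * dir_extend (Suc n) q j ^ e) \<partial>PiM {..<n} (\<lambda>_. lborel))
       = (\<integral>\<^sup>+q. ennreal c * ennreal (indicator (dir_simplex (Suc n)) q * (\<Prod>k<Suc n. dir_extend (Suc n) q k powr (\<beta> k - 1))) \<partial>PiM {..<n} (\<lambda>_. lborel))"
      unfolding pw using cpos by (intro nn_integral_cong) (simp add: ennreal_mult' del: prod.lessThan_Suc)
    also have "\<dots> = ennreal c * ennreal ((\<Prod>k<Suc n. Gamma (\<beta> k)) / Gamma (\<Sum>k<Suc n. \<beta> k))"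
      by (subst nn_integral_cmult) (auto simp: DirB[OF b1] simp del: prod.lessThan_Suc sum.lessThan_Suc)
    also have "\<dots> = ennreal (Gamma (\<alpha> j + real e) * Gamma S / (Gamma (\<alpha> j) * Gamma (S + real e)))"
      using cpos nonneg val by (simp add: ennreal_mult[symmetric])
    finally show "(\<integral>\<^sup>+q. ennreal (indicator (dir_simplex (Suc n)) q * dir_density (Suc n) \<alpha> (dir_extend (Suc n) q) * dir_extend (Suc n) q j ^ e) \<partial>PiM {..<n} (\<lambda>_. lborel))
       = ennreal (Gamma (\<alpha> j + real e) * Gamma S / (Gamma (\<alpha> j) * Gamma (S + real e)))" .
  qed
qed



lemma xlnx_lower:
  fixes p c :: real assumes "p \<ge> 0" "c > 0"
  shows "p * ln p \<le> c * ln c + (1 + ln c) * (p - c) + (p - c)^2 / c"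
proof (cases "p = 0")
  case True
  then show ?thesis using assms by (simp add: power2_eq_square algebra_simps)
next
  case False
  then have p: "p > 0" using assms by simp
  have "ln (p / c) \<le> p / c - 1" using p assms by (intro ln_le_minus_one) simp
  then have "p * ln (p / c) \<le> p * (p / c - 1)" using p by (intro mult_left_mono) auto
  moreover have "ln (p / c) = ln p - ln c" using p assms by (simp add: ln_div)
  moreover have "p * (p / c - 1) = (p - c)^2 / c + (p - c)" using assms
    by (simp add: field_simps power2_eq_square)
  ultimately show ?thesis by (simp add: algebra_simps)
qed

lemma ln_diff_ge:
  fixes x y :: real assumes "0 < x" "x \<le> y" "y \<le> 1"
  shows "y - x \<le> ln y - ln x"
proof -
  have "ln (x / y) \<le> x / y - 1" using assms by (intro ln_le_minus_one) simp
  then have "1 - x / y \<le> ln y - ln x" using assms by (simp add: ln_div)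
  moreover have "y - x \<le> 1 - x / y"
  proof -
    have "(y - x) * y \<le> (y - x)" using assms by (intro mult_left_le) auto
    then show ?thesis using assms by (simp add: field_simps)
  qed
  ultimately show ?thesis by linarith
qed

lemma xlnx_upper:
  fixes p c :: real assumes "0 \<le> p" "p \<le> 1" "0 < c" "c < 1"
  shows "c * ln c + (1 + ln c) * (p - c) + (p - c)^2 / 2 \<le> p * ln p"
proof (cases "p = 0")
  case True
  have "c * c \<le> 2 * c" using assms by (intro mult_right_mono) auto
  then show ?thesis using True assms by (simp add: power2_eq_square algebra_simps)
next
  case False
  then have p: "p > 0" using assms by simp
  define f where "f = (\<lambda>x::real. x * ln x - x^2 / 2)"
  define f' where "f' = (\<lambda>x::real. ln x + 1 - x)"
  have der: "\<And>x. x \<in> {0<..1} \<Longrightarrow> (f has_real_derivative f' x) (at x)"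
    unfolding f_def f'_def by (auto intro!: derivative_eq_intros simp: power2_eq_square)
  have cvx: "convex_on {0<..1} f"
  proof (rule convex_on_realI[OF _ der])
    show "connected {0<..(1::real)}" by simp
    fix x y :: real assume "x \<in> {0<..1}" "y \<in> {0<..1}" "x \<le> y"
    then show "f' x \<le> f' y" using ln_diff_ge[of x y] unfolding f'_def by auto
  qed auto
  have "f' c * (p - c) \<le> f p - f c"
    using assms p
    by (intro convex_on_imp_above_tangent[OF cvx]) (auto intro!: DERIV_subset[OF der])
  then show ?thesis unfolding f_def f'_def by (simp add: power2_eq_square field_simps)
qed

lemma xlnx_bound:
  fixes p :: real assumes "0 \<le> p" "p \<le> 1"
  shows "\<bar>p * ln p\<bar> \<le> 1"
proof (cases "p = 0")
  case False
  then have p: "p > 0" using assms by simp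
  have "ln p \<le> 0" using assms p by simp
  then have "p * ln p \<le> 0" using p by (simp add: mult_nonneg_nonpos)
  moreover have "ln (1/p) \<le> 1/p - 1" using p by (intro ln_le_minus_one) simp
  then have "- ln p \<le> 1/p - 1" using p by (simp add: ln_div)
  then have "p * (- ln p) \<le> p * (1/p - 1)" using p by (intro mult_left_mono) auto
  then have "- (p * ln p) \<le> 1 - p" using p by (simp add: algebra_simps)
  ultimately show ?thesis using assms by linarith
qed simp



lemma dens_nonneg:
  assumes a: "\<forall>k<Suc n. \<alpha> k \<ge> 1"
  shows "dir_density (Suc n) \<alpha> p \<ge> 0"
proof -
  have "Ssum (Suc n) \<alpha> > 0" unfolding Ssum_def using a
    by (intro sum_pos) (auto intro: less_le_trans[OF zero_less_one])
  moreover have "(\<Prod>k<Suc n. Gamma (\<alpha> k)) \<ge> 0"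
  proof (intro prod_nonneg)
    fix k assume "k \<in> {..<Suc n}"
    then have "\<alpha> k > 0" using a by (auto intro: less_le_trans[OF zero_less_one])
    then show "Gamma (\<alpha> k) \<ge> 0" by (simp add: less_imp_le)
  qed
  moreover have "(\<Prod>k<Suc n. p k powr (\<alpha> k - 1)) \<ge> 0" by (rule prod_nonneg) simp
  moreover have "Gamma (Ssum (Suc n) \<alpha>) \<ge> 0" using calculation(1) by (simp add: less_imp_le)
  ultimately show ?thesis unfolding dir_density_def
    by (intro mult_nonneg_nonneg divide_nonneg_nonneg) (simp_all del: prod.lessThan_Suc)
qed

lemma ext_le1:
  assumes "q \<in> dir_simplex (Suc n)" "k < Suc n"
  shows "dir_extend (Suc n) q k \<le> 1"
proof -
  have "dir_extend (Suc n) q k \<le> (\<Sum>j<Suc n. dir_extend (Suc n) q j)"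
    using assms by (intro member_le_sum) (auto intro: ext_nonneg)
  then show ?thesis by (simp only: ext_sum)
qed

lemma mom_poly:
  fixes \<alpha> :: "nat \<Rightarrow> real" and n :: nat
  assumes a: "\<forall>k<Suc n. \<alpha> k \<ge> 1" and j: "j < Suc n"
  defines "S \<equiv> Ssum (Suc n) \<alpha>"
  shows "has_bochner_integral (PiM {..<n} (\<lambda>_. lborel))
     (\<lambda>q. indicator (dir_simplex (Suc n)) q * dir_density (Suc n) \<alpha> (dir_extend (Suc n) q) *
        (A + B * dir_extend (Suc n) q j + C * dir_extend (Suc n) q j ^ 2))
     (A + B * (\<alpha> j / S) + C * (\<alpha> j * (\<alpha> j + 1) / (S * (S + 1))))"
proof -
  let ?w = "\<lambda>q. indicator (dir_simplex (Suc n)) q * dir_density (Suc n) \<alpha> (dir_extend (Suc n) q)"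
  let ?p = "\<lambda>q. dir_extend (Suc n) q j"
  have Spos: "S > 0" unfolding S_def Ssum_def using a
    by (intro sum_pos) (auto intro: less_le_trans[OF zero_less_one])
  have apos: "\<alpha> j > 0" using a j by (auto intro: less_le_trans[OF zero_less_one])
  have GS: "Gamma S > 0" using Spos by simp
  have Ga: "Gamma (\<alpha> j) > 0" using apos by simp
  have GS0: "Gamma S \<noteq> 0" "Gamma (\<alpha> j) \<noteq> 0" using GS Ga by simp_all
  have m0: "has_bochner_integral (PiM {..<n} (\<lambda>_. lborel)) (\<lambda>q. ?w q * ?p q ^ 0) 1"
    using Dir_moment[OF a j, of 0] GS Ga unfolding S_def by simp
  have m1: "has_bochner_integral (PiM {..<n} (\<lambda>_. lborel)) (\<lambda>q. ?w q * ?p q ^ 1) (\<alpha> j / S)"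
  proof -
    have "Gamma (\<alpha> j + real 1) * Gamma S / (Gamma (\<alpha> j) * Gamma (S + real 1)) = \<alpha> j / S"
      using Gamma_p1[OF apos] Gamma_p1[OF Spos] GS0 Spos by (simp add: field_simps)
    then show ?thesis using Dir_moment[OF a j, of 1] unfolding S_def by simp
  qed
  have m2: "has_bochner_integral (PiM {..<n} (\<lambda>_. lborel)) (\<lambda>q. ?w q * ?p q ^ 2) (\<alpha> j * (\<alpha> j + 1) / (S * (S + 1)))"
  proof -
    have e1: "\<alpha> j + real 2 = (\<alpha> j + 1) + 1" "S + real 2 = (S + 1) + 1" by simp_all
    have g2a: "Gamma (\<alpha> j + real 2) = \<alpha> j * (\<alpha> j + 1) * Gamma (\<alpha> j)"
      unfolding e1 using Gamma_p1[OF apos] Gamma_p1[of "\<alpha> j + 1"] apos by simp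
    have g2S: "Gamma (S + real 2) = S * (S + 1) * Gamma S"
      unfolding e1 using Gamma_p1[OF Spos] Gamma_p1[of "S + 1"] Spos by simp
    have "Gamma (\<alpha> j + real 2) * Gamma S / (Gamma (\<alpha> j) * Gamma (S + real 2)) =
       (\<alpha> j * (\<alpha> j + 1)) * (Gamma (\<alpha> j) * Gamma S) / ((S * (S + 1)) * (Gamma (\<alpha> j) * Gamma S))"
      unfolding g2a g2S by (simp add: mult_ac)
    also have "\<dots> = \<alpha> j * (\<alpha> j + 1) / (S * (S + 1))" using GS0 by simp
    finally have "Gamma (\<alpha> j + real 2) * Gamma S / (Gamma (\<alpha> j) * Gamma (S + real 2)) = \<alpha> j * (\<alpha> j + 1) / (S * (S + 1))" .
    then show ?thesis using Dir_moment[OF a j, of 2] unfolding S_def by simp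
  qed
  have "has_bochner_integral (PiM {..<n} (\<lambda>_. lborel))
     (\<lambda>q. A * (?w q * ?p q ^ 0) + B * (?w q * ?p q ^ 1) + C * (?w q * ?p q ^ 2))
     (A * 1 + B * (\<alpha> j / S) + C * (\<alpha> j * (\<alpha> j + 1) / (S * (S + 1))))"
    using m0 m1 m2 by (intro has_bochner_integral_add has_bochner_integral_mult_right)
  then show ?thesis by (simp add: algebra_simps)
qed



lemma ent_k:
  fixes \<alpha> :: "nat \<Rightarrow> real" and n k :: nat
  assumes a: "\<forall>k<Suc n. \<alpha> k \<ge> 1" and n: "n \<ge> 1" and k: "k < Suc n"
  defines "S \<equiv> Ssum (Suc n) \<alpha>"
  defines "c \<equiv> \<alpha> k / S"
  defines "g \<equiv> (\<lambda>q. indicator (dir_simplex (Suc n)) q * dir_density (Suc n) \<alpha> (dir_extend (Suc n) q) *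
        (dir_extend (Suc n) q k * ln (dir_extend (Suc n) q k)))"
  shows "integrable (PiM {..<n} (\<lambda>_. lborel)) g"
    "integral\<^sup>L (PiM {..<n} (\<lambda>_. lborel)) g \<le> c * ln c + (1 - c) / (S + 1)"
    "integral\<^sup>L (PiM {..<n} (\<lambda>_. lborel)) g \<ge> c * ln c + c * (1 - c) / (2 * (S + 1))"
proof -
  let ?M = "PiM {..<n} (\<lambda>_. lborel)"
  let ?w = "\<lambda>q. indicator (dir_simplex (Suc n)) q * dir_density (Suc n) \<alpha> (dir_extend (Suc n) q)"
  let ?p = "\<lambda>q. dir_extend (Suc n) q k"
  have Spos: "S > 0" unfolding S_def Ssum_def using a
    by (intro sum_pos) (auto intro: less_le_trans[OF zero_less_one])
  have ak: "\<alpha> k \<ge> 1" using a k by auto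
  obtain j where j: "j < Suc n" "j \<noteq> k"
    using n k by (metis One_nat_def Suc_le_eq Suc_less_eq less_Suc_eq_0_disj not_less_eq zero_less_Suc)
  have "S = \<alpha> k + (\<Sum>i\<in>{..<Suc n} - {k}. \<alpha> i)"
    unfolding S_def Ssum_def using k sum.remove[of "{..<Suc n}" k \<alpha>] by (simp del: sum.lessThan_Suc)
  moreover have "(\<Sum>i\<in>{..<Suc n} - {k}. \<alpha> i) \<ge> \<alpha> j"
    using j a by (intro member_le_sum) (auto intro: order.trans[OF zero_le_one])
  ultimately have Sgt: "S \<ge> \<alpha> k + 1" using a j by force
  have c0: "c > 0" unfolding c_def using Spos ak by simp
  have c1: "c < 1" unfolding c_def using Spos Sgt by simp
  have ac: "\<alpha> k = c * S" unfolding c_def using Spos by simp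
  have wnn: "?w q \<ge> 0" for q using dens_nonneg[OF a] by simp
  have w_int: "integrable ?M ?w"
    using integrable.intros[OF Dir_moment[OF a k, of 0]] by simp
  have gm: "g \<in> borel_measurable ?M" unfolding g_def by measurable
  show gi: "integrable ?M g"
  proof (rule Bochner_Integration.integrable_bound[OF w_int gm], rule AE_I2)
    fix q :: "nat \<Rightarrow> real" assume "q \<in> space ?M"
    show "norm (g q) \<le> norm (?w q)"
    proof (cases "q \<in> dir_simplex (Suc n)")
      case True
      have "\<bar>?p q * ln (?p q)\<bar> \<le> 1"
        using ext_nonneg[OF True k] ext_le1[OF True k] by (intro xlnx_bound)
      then have "\<bar>?w q\<bar> * \<bar>?p q * ln (?p q)\<bar> \<le> \<bar>?w q\<bar> * 1" by (intro mult_left_mono) auto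
      then show ?thesis unfolding g_def by (simp add: abs_mult)
    qed (simp add: g_def)
  qed
  have lo: "has_bochner_integral ?M (\<lambda>q. ?w q * (0 + (ln c - 1) * ?p q + (1 / c) * ?p q ^ 2))
     (0 + (ln c - 1) * (\<alpha> k / S) + (1 / c) * (\<alpha> k * (\<alpha> k + 1) / (S * (S + 1))))"
    using mom_poly[OF a k] unfolding S_def by blast
  have up: "has_bochner_integral ?M (\<lambda>q. ?w q * ((c^2/2 - c) + (1 + ln c - c) * ?p q + (1 / 2) * ?p q ^ 2))
     ((c^2/2 - c) + (1 + ln c - c) * (\<alpha> k / S) + (1 / 2) * (\<alpha> k * (\<alpha> k + 1) / (S * (S + 1))))"
    using mom_poly[OF a k] unfolding S_def by blast
  have v1: "0 + (ln c - 1) * (\<alpha> k / S) + (1 / c) * (\<alpha> k * (\<alpha> k + 1) / (S * (S + 1))) = c * ln c + (1 - c) / (S + 1)"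
  proof -
    have "(1 / c) * (c * S * (c * S + 1) / (S * (S + 1))) = (S * (c * S + 1)) / (S * (S + 1))"
      using c0 by (simp add: mult.assoc)
    also have "\<dots> = (c * S + 1) / (S + 1)" using Spos by simp
    finally have e: "(1 / c) * (c * S * (c * S + 1) / (S * (S + 1))) = (c * S + 1) / (S + 1)" .
    show ?thesis unfolding ac e using Spos c0 by (simp add: field_simps)
  qed
  have v2: "(c^2/2 - c) + (1 + ln c - c) * (\<alpha> k / S) + (1 / 2) * (\<alpha> k * (\<alpha> k + 1) / (S * (S + 1))) = c * ln c + c * (1 - c) / (2 * (S + 1))"
  proof -
    have "c * S * (c * S + 1) / (S * (S + 1)) = (S * (c * (c * S + 1))) / (S * (S + 1))"
      by (simp add: mult_ac)
    also have "\<dots> = c * (c * S + 1) / (S + 1)" using Spos by (simp only: mult_divide_mult_cancel_left_if) simp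
    finally have "(1 / 2) * (c * S * (c * S + 1) / (S * (S + 1))) = (1/2) * (c * (c * S + 1) / (S + 1))" by simp
    also have "\<dots> = c * (c * S + 1) / (2 * (S + 1))" by simp
    finally have e: "(1 / 2) * (c * S * (c * S + 1) / (S * (S + 1))) = c * (c * S + 1) / (2 * (S + 1))" .
    show ?thesis unfolding ac e using Spos c0 by (simp add: field_simps power2_eq_square)
  qed
  show "integral\<^sup>L ?M g \<le> c * ln c + (1 - c) / (S + 1)"
  proof -
    have "integral\<^sup>L ?M g \<le> integral\<^sup>L ?M (\<lambda>q. ?w q * (0 + (ln c - 1) * ?p q + (1 / c) * ?p q ^ 2))"
    proof (rule integral_mono[OF gi integrable.intros[OF lo]])
      fix q :: "nat \<Rightarrow> real" assume "q \<in> space ?M"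
      show "g q \<le> ?w q * (0 + (ln c - 1) * ?p q + (1 / c) * ?p q ^ 2)"
      proof (cases "q \<in> dir_simplex (Suc n)")
        case True
        have "?p q * ln (?p q) \<le> c * ln c + (1 + ln c) * (?p q - c) + (?p q - c)^2 / c"
          using ext_nonneg[OF True k] c0 by (intro xlnx_lower)
        also have "\<dots> = 0 + (ln c - 1) * ?p q + (1 / c) * ?p q ^ 2"
          using c0 by (simp add: field_simps power2_eq_square)
        finally show ?thesis unfolding g_def using wnn[of q] by (intro mult_left_mono) auto
      qed (simp add: g_def)
    qed
    then show ?thesis using has_bochner_integral_integral_eq[OF lo] v1 by simp
  qed
  show "integral\<^sup>L ?M g \<ge> c * ln c + c * (1 - c) / (2 * (S + 1))"
  proof -
    have "integral\<^sup>L ?M (\<lambda>q. ?w q * ((c^2/2 - c) + (1 + ln c - c) * ?p q + (1 / 2) * ?p q ^ 2)) \<le> integral\<^sup>L ?M g"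
    proof (rule integral_mono[OF integrable.intros[OF up] gi])
      fix q :: "nat \<Rightarrow> real" assume "q \<in> space ?M"
      show "?w q * ((c^2/2 - c) + (1 + ln c - c) * ?p q + (1 / 2) * ?p q ^ 2) \<le> g q"
      proof (cases "q \<in> dir_simplex (Suc n)")
        case True
        have "(c^2/2 - c) + (1 + ln c - c) * ?p q + (1 / 2) * ?p q ^ 2 = c * ln c + (1 + ln c) * (?p q - c) + (?p q - c)^2 / 2"
          by (simp add: field_simps power2_eq_square)
        also have "\<dots> \<le> ?p q * ln (?p q)"
          using ext_nonneg[OF True k] ext_le1[OF True k] c0 c1 by (intro xlnx_upper)
        finally show ?thesis unfolding g_def using wnn[of q] by (intro mult_left_mono) auto
      qed (simp add: g_def)
    qed
    then show ?thesis using has_bochner_integral_integral_eq[OF up] v2 by simp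
  qed
qed



lemma aux_alg:
  fixes L S Y D :: real assumes "L > 0" "S > 0"
  shows "(-1/L)*Y - D/((S+1)*L) = (-1/L)*(Y + D/(S+1))"
proof -
  have "(-1/L)*(Y + D/(S+1)) = (-1/L)*Y + (-1/L)*(D/(S+1))" by (simp add: distrib_left)
  also have "(-1/L)*(D/(S+1)) = - (D/((S+1)*L))" by (simp add: mult.commute)
  finally show ?thesis by simp
qed

lemma alea_bounds:
  fixes \<alpha> :: "nat \<Rightarrow> real" and K :: nat
  assumes K: "K \<ge> 2" and a: "\<forall>k<K. \<alpha> k \<ge> 1"
  shows "u_en K \<alpha> - (real K - 1) / ((Ssum K \<alpha> + 1) * ln (real K)) \<le> u_alea K \<alpha>"
    and "u_alea K \<alpha> < u_en K \<alpha>"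
proof -
  obtain n where nK: "K = Suc n" and n: "n \<ge> 1" using K by (cases K) auto
  define S where "S = Ssum K \<alpha>"
  define c where "c = (\<lambda>k. \<alpha> k / S)"
  let ?M = "PiM {..<n} (\<lambda>_. lborel::real measure)"
  define g where "g = (\<lambda>k q. indicator (dir_simplex (Suc n)) q * dir_density (Suc n) \<alpha> (dir_extend (Suc n) q) *
        (dir_extend (Suc n) q k * ln (dir_extend (Suc n) q k)))"
  have a': "\<forall>k<Suc n. \<alpha> k \<ge> 1" using a nK by simp
  have Spos: "S > 0" unfolding S_def Ssum_def using a
    using K by (intro sum_pos) (auto simp: lessThan_empty_iff intro: less_le_trans[OF zero_less_one])
  have lnK: "ln (real K) > 0" using K by simp
  have csum: "(\<Sum>k<K. c k) = 1" unfolding c_def S_def Ssum_def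
    using Spos[unfolded S_def Ssum_def] by (simp add: sum_divide_distrib[symmetric])
  note ek = ent_k[OF a' n]
  have SnS: "Ssum (Suc n) \<alpha> = S" using nK S_def by simp
  have ck: "\<And>k. \<alpha> k / S = c k" by (simp add: c_def)
  define I where "I = (\<lambda>k. integral\<^sup>L ?M (g k))"
  have hb: "has_bochner_integral ?M (\<lambda>q. (- 1 / ln (real K)) * (\<Sum>k<K. g k q)) ((- 1 / ln (real K)) * (\<Sum>k<K. I k))"
  proof (intro has_bochner_integral_mult_right has_bochner_integral_sum)
    fix k assume "k \<in> {..<K}"
    then have "k < Suc n" using nK by simp
    then show "has_bochner_integral ?M (g k) (I k)"
      unfolding I_def g_def by (rule has_bochner_integral_integrable[OF ek(1)])
  qed
  have ualea: "u_alea K \<alpha> = (- 1 / ln (real K)) * (\<Sum>k<K. I k)"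
  proof -
    have "u_alea K \<alpha> = integral\<^sup>L ?M (\<lambda>q. (- 1 / ln (real K)) * (\<Sum>k<K. g k q))"
      unfolding u_alea_def dir_expect_def
    proof (intro Bochner_Integration.integral_cong)
      show "PiM {..<K - 1} (\<lambda>_. lborel) = ?M" using nK by simp
      fix q assume "q \<in> space ?M"
      show "indicator (dir_simplex K) q * dir_density K \<alpha> (dir_extend K q) * H K (dir_extend K q) =
          - 1 / ln (real K) * (\<Sum>k<K. g k q)"
      proof -
        let ?p = "dir_extend K q"
        let ?w = "indicator (dir_simplex K) q * dir_density K \<alpha> (dir_extend K q)"
        have h: "H K ?p = - (\<Sum>k<K. ?p k * ln (?p k)) / ln (real K)"
          unfolding H_def log_def by (simp add: sum_divide_distrib times_divide_eq_right)
        have "?w * H K ?p = - 1 / ln (real K) * (?w * (\<Sum>k<K. ?p k * ln (?p k)))"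
          unfolding h by simp
        also have "?w * (\<Sum>k<K. ?p k * ln (?p k)) = (\<Sum>k<K. g k q)"
          unfolding g_def nK by (simp add: sum_distrib_left mult.assoc del: sum.lessThan_Suc)
        finally show ?thesis .
      qed
    qed
    then show ?thesis using has_bochner_integral_integral_eq[OF hb] by simp
  qed
  have uen: "u_en K \<alpha> = (- 1 / ln (real K)) * (\<Sum>k<K. c k * ln (c k))"
    unfolding u_en_def H_def log_def c_def S_def
    by (simp add: sum_divide_distrib times_divide_eq_right)
  have Ilo: "(\<Sum>k<K. I k) \<le> (\<Sum>k<K. c k * ln (c k)) + (real K - 1) / (S + 1)"
  proof -
    have "(\<Sum>k<K. I k) \<le> (\<Sum>k<K. c k * ln (c k) + (1 - c k) / (S + 1))"
    proof (rule sum_mono)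
      fix k assume "k \<in> {..<K}"
      then have "k < Suc n" using nK by simp
      then show "I k \<le> c k * ln (c k) + (1 - c k) / (S + 1)"
        using ek(2)[of k] unfolding I_def g_def SnS ck by simp
    qed
    also have "\<dots> = (\<Sum>k<K. c k * ln (c k)) + (real K - 1) / (S + 1)"
      by (simp add: sum.distrib sum_divide_distrib[symmetric] sum_subtractf csum)
    finally show ?thesis .
  qed
  have Iup: "(\<Sum>k<K. I k) > (\<Sum>k<K. c k * ln (c k))"
  proof -
    have "(\<Sum>k<K. c k * ln (c k)) < (\<Sum>k<K. c k * ln (c k) + c k * (1 - c k) / (2 * (S + 1)))"
    proof (rule sum_strict_mono)
      fix k assume "k \<in> {..<K}"
      then have kn: "k < Suc n" using nK by simp
      have Sgt: "S \<ge> \<alpha> k + 1"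
      proof -
        obtain j where j: "j < Suc n" "j \<noteq> k"
          using n kn by (metis One_nat_def Suc_le_eq Suc_less_eq less_Suc_eq_0_disj not_less_eq zero_less_Suc)
        have "S = \<alpha> k + (\<Sum>i\<in>{..<Suc n} - {k}. \<alpha> i)"
          unfolding S_def Ssum_def nK using kn sum.remove[of "{..<Suc n}" k \<alpha>] by (simp del: sum.lessThan_Suc)
        moreover have "(\<Sum>i\<in>{..<Suc n} - {k}. \<alpha> i) \<ge> \<alpha> j"
          using j a' by (intro member_le_sum) (auto intro: order.trans[OF zero_le_one])
        ultimately show ?thesis using a' j by force
      qed
      have "c k > 0" "c k < 1" using Spos Sgt a' kn unfolding c_def by auto
      then show "c k * ln (c k) < c k * ln (c k) + c k * (1 - c k) / (2 * (S + 1))"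
        using Spos by (simp add: field_simps)
    qed (use K in \<open>auto simp: lessThan_empty_iff\<close>)
    also have "\<dots> \<le> (\<Sum>k<K. I k)"
    proof (rule sum_mono)
      fix k assume "k \<in> {..<K}"
      then have "k < Suc n" using nK by simp
      then show "c k * ln (c k) + c k * (1 - c k) / (2 * (S + 1)) \<le> I k"
        using ek(3)[of k] unfolding I_def g_def SnS ck by simp
    qed
    finally show ?thesis .
  qed
  show "u_en K \<alpha> - (real K - 1) / ((Ssum K \<alpha> + 1) * ln (real K)) \<le> u_alea K \<alpha>"
  proof -
    have e: "(- 1 / ln (real K)) * (\<Sum>k<K. c k * ln (c k)) - (real K - 1) / ((S + 1) * ln (real K))
       = (- 1 / ln (real K)) * ((\<Sum>k<K. c k * ln (c k)) + (real K - 1) / (S + 1))"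
      by (rule aux_alg[OF lnK Spos])
    have "(- 1 / ln (real K)) * ((\<Sum>k<K. c k * ln (c k)) + (real K - 1) / (S + 1)) \<le> (- 1 / ln (real K)) * (\<Sum>k<K. I k)"
      using Ilo lnK by (intro mult_left_mono_neg) auto
    then show ?thesis unfolding ualea uen S_def[symmetric] e .
  qed
  show "u_alea K \<alpha> < u_en K \<alpha>"
    unfolding ualea uen using Iup lnK by (simp add: field_simps)
qed



lemma Ssum_pos:
  assumes K: "K \<ge> 2" and a: "\<forall>k<K. \<alpha> k \<ge> 1"
  shows "Ssum K \<alpha> \<ge> real K"
proof -
  have "(\<Sum>k<K. (1::real)) \<le> (\<Sum>k<K. \<alpha> k)" using a by (intro sum_mono) auto
  then show ?thesis by (simp add: Ssum_def)
qed

lemma gap: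
  assumes K: "K \<ge> 2" and a: "\<forall>k<K. \<alpha> k \<ge> 1"
  shows "u_en K \<alpha> - real K / Ssum K \<alpha> < u_alea K \<alpha>"
proof -
  define S where "S = Ssum K \<alpha>"
  have S: "S \<ge> real K" "S > 0" using Ssum_pos[OF K a] K unfolding S_def by auto
  have Kp: "real K > 1" using K by simp
  have lnK: "ln (real K) > 0" using Kp by simp
  have "ln (1 / real K) \<le> 1 / real K - 1" using Kp by (intro ln_le_minus_one) simp
  then have l1: "real K * ln (real K) \<ge> real K - 1" using Kp by (simp add: ln_div field_simps)
  have "(real K - 1) * S < (real K - 1) * (S + 1)" using Kp by simp
  also have "\<dots> \<le> real K * ln (real K) * (S + 1)" using l1 S by (intro mult_right_mono) auto
  finally have "(real K - 1) * S < real K * ((S + 1) * ln (real K))" by (simp add: mult_ac)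
  then have "(real K - 1) / ((S + 1) * ln (real K)) < real K / S"
    using S lnK by (simp add: divide_simps mult_ac)
  then show ?thesis using alea_bounds(1)[OF K a] unfolding S_def by linarith
qed

lemma ln_bound2:
  fixes x :: real assumes "x > 1"
  shows "2 * (x - 1) < (x + 1) * ln x"
proof -
  define f where "f = (\<lambda>x::real. ln x - 2 * (x - 1) / (x + 1))"
  have d: "\<And>z. z \<ge> 1 \<Longrightarrow> (f has_real_derivative (1 / z - 4 / (z + 1)^2)) (at z)"
  proof -
    fix z :: real assume z: "z \<ge> 1"
    have "(f has_real_derivative (1 / z - (2 * (z + 1) - 2 * (z - 1)) / (z + 1)^2)) (at z)"
      unfolding f_def using z
      by (auto intro!: derivative_eq_intros simp: power2_eq_square)
    moreover have "(2 * (z + 1) - 2 * (z - 1)) = (4::real)" by simp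
    ultimately show "(f has_real_derivative (1 / z - 4 / (z + 1)^2)) (at z)" by simp
  qed
  obtain z where z: "1 < z" "z < x" "f x - f 1 = (x - 1) * (1 / z - 4 / (z + 1)^2)"
    using MVT2[OF assms, of f "\<lambda>z. 1 / z - 4 / (z + 1)^2"] d by auto
  have "4 * z < (z + 1)^2"
  proof -
    have "0 < (z - 1)^2" using z by simp
    then show ?thesis by (simp add: power2_eq_square algebra_simps)
  qed
  then have "4 / (z + 1)^2 < 1 / z" using z by (simp add: field_simps)
  then have "(x - 1) * (1 / z - 4 / (z + 1)^2) > 0" using assms by (intro mult_pos_pos) auto
  then have "f x > f 1" using z(3) by linarith
  then have "ln x > 2 * (x - 1) / (x + 1)" by (simp add: f_def)
  then show ?thesis using assms by (simp add: field_simps)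
qed

lemma H_uniform:
  assumes K: "K \<ge> 2" and q: "\<forall>k<K. q k = 1 / real K"
  shows "H K q = 1"
proof -
  have Kp: "real K > 1" using K by simp
  have l: "log (real K) (1 / real K) = -1" using Kp by (simp add: log_def ln_div)
  have "H K q = - (\<Sum>k<K. (1 / real K) * log (real K) (1 / real K))"
    unfolding H_def using q by simp
  also have "\<dots> = 1" using Kp by (simp add: l)
  finally show ?thesis .
qed

lemma en_equal:
  assumes K: "K \<ge> 2" and a: "\<forall>k<K. \<alpha> k = t" and t: "t > 0"
  shows "u_en K \<alpha> = 1"
proof -
  have S: "Ssum K \<alpha> = real K * t" unfolding Ssum_def using a by simp
  show ?thesis unfolding u_en_def
    by (rule H_uniform[OF K]) (use a t K in \<open>simp add: S\<close>)
qed

lemma Bal_le1: assumes "x \<ge> 0" "y \<ge> 0" shows "Bal x y \<le> 1"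
  using assms by (simp add: Bal_def)

lemma diss_le:
  assumes K: "K \<ge> 2" and a: "\<forall>k<K. \<alpha> k \<ge> 1"
  shows "u_diss K \<alpha> \<le> (\<Sum>k<K. belief K \<alpha> k)"
proof -
  have Spos: "Ssum K \<alpha> > 0" using Ssum_pos[OF K a] K by linarith
  have bnn: "\<And>k. k < K \<Longrightarrow> belief K \<alpha> k \<ge> 0" using a Spos by (simp add: belief_def)
  show ?thesis unfolding u_diss_def Let_def
  proof (rule sum_mono)
    fix k assume k: "k \<in> {..<K}"
    let ?b = "belief K \<alpha>"
    let ?D = "\<Sum>j\<in>{..<K} - {k}. ?b j"
    let ?N = "\<Sum>j\<in>{..<K} - {k}. ?b j * Bal (?b j) (?b k)"
    have Dnn: "?D \<ge> 0" using bnn by (intro sum_nonneg) auto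
    have ND: "?N \<le> ?D"
    proof (rule sum_mono)
      fix j assume "j \<in> {..<K} - {k}"
      then have "?b j \<ge> 0" "?b k \<ge> 0" using bnn k by auto
      then show "?b j * Bal (?b j) (?b k) \<le> ?b j"
        using Bal_le1 by (simp add: mult_left_le)
    qed
    show "(if ?D = 0 then 0 else ?b k * ?N / ?D) \<le> ?b k"
    proof (cases "?D = 0")
      case True then show ?thesis using bnn k by simp
    next
      case False
      then have "?D > 0" using Dnn by simp
      then have "?N / ?D \<le> 1" using ND by simp
      then have "?b k * (?N / ?D) \<le> ?b k * 1" using bnn k by (intro mult_left_mono) auto
      then show ?thesis using False by simp
    qed
  qed
qed

lemma belief_sum:
  assumes K: "K \<ge> 2" and a: "\<forall>k<K. \<alpha> k \<ge> 1"
  shows "(\<Sum>k<K. belief K \<alpha> k) = 1 - real K / Ssum K \<alpha>"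
proof -
  have Spos: "Ssum K \<alpha> > 0" using Ssum_pos[OF K a] K by linarith
  have "(\<Sum>k<K. belief K \<alpha> k) = (\<Sum>k<K. \<alpha> k - 1) / Ssum K \<alpha>"
    unfolding belief_def by (simp add: sum_divide_distrib)
  also have "\<dots> = (Ssum K \<alpha> - real K) / Ssum K \<alpha>" by (simp add: sum_subtractf Ssum_def)
  also have "\<dots> = 1 - real K / Ssum K \<alpha>" using Spos by (simp add: field_simps)
  finally show ?thesis .
qed

lemma diss_equal:
  assumes K: "K \<ge> 2" and a: "\<forall>k<K. \<alpha> k = t" and t: "t > 1"
  shows "u_diss K \<alpha> = 1 - real K / Ssum K \<alpha>"
proof -
  have S: "Ssum K \<alpha> = real K * t" unfolding Ssum_def using a by simp
  define b where "b = (t - 1) / (real K * t)"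
  have Kp: "real K > 1" using K by simp
  have bpos: "b > 0" unfolding b_def using t Kp by simp
  have bel: "\<And>k. k < K \<Longrightarrow> belief K \<alpha> k = b" unfolding belief_def b_def S using a by simp
  have tm: "(if (\<Sum>j\<in>{..<K} - {k}. belief K \<alpha> j) = 0 then 0 else belief K \<alpha> k *
      (\<Sum>j\<in>{..<K} - {k}. belief K \<alpha> j * Bal (belief K \<alpha> j) (belief K \<alpha> k)) / (\<Sum>j\<in>{..<K} - {k}. belief K \<alpha> j)) = b" if k: "k < K" for k
  proof -
    have c: "card ({..<K} - {k}) = K - 1" using k by simp
    have D: "(\<Sum>j\<in>{..<K} - {k}. belief K \<alpha> j) = real (K - 1) * b"
      using bel by (simp add: c)
    have Bal1: "Bal b b = 1" using bpos by (simp add: Bal_def)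
    have N: "(\<Sum>j\<in>{..<K} - {k}. belief K \<alpha> j * Bal (belief K \<alpha> j) (belief K \<alpha> k)) = real (K - 1) * b"
      using bel k by (simp add: c Bal1)
    have "real (K - 1) > 0" using K by simp
    then show ?thesis unfolding D N using bel[OF k] bpos by simp
  qed
  have "u_diss K \<alpha> = (\<Sum>k<K. b)" unfolding u_diss_def Let_def by (rule sum.cong) (auto simp: tm)
  also have "\<dots> = real K * b" by simp
  also have "\<dots> = 1 - real K / Ssum K \<alpha>" unfolding b_def S using t Kp by (simp add: field_simps)
  finally show ?thesis .
qed



theorem theorem1:
  fixes K :: nat
  assumes "K \<ge> 2"
  shows
    "(\<forall>\<alpha>. (\<forall>k<K. \<alpha> k \<ge> 1) \<longrightarrow>
         u_v K \<alpha> + u_diss K \<alpha> \<le> 1 \<and> u_v K \<alpha> > u_epis K \<alpha>)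
   \<and> (let \<alpha> = (\<lambda>_. 1::real) in
         1 = u_v K \<alpha> \<and> u_v K \<alpha> = u_en K \<alpha> \<and> u_en K \<alpha> > u_alea K \<alpha> \<and>
         u_alea K \<alpha> > u_epis K \<alpha> \<and> u_epis K \<alpha> > u_diss K \<alpha> \<and> u_diss K \<alpha> = 0)
   \<and> (\<forall>\<alpha>. (\<forall>k<K. \<alpha> k \<ge> 1) \<and> (\<forall>j<K. \<forall>k<K. \<alpha> j = \<alpha> k) \<longrightarrow> u_en K \<alpha> = 1)
   \<and> ((\<lambda>S. u_diss K (\<lambda>_. S / real K)) \<longlongrightarrow> 1) at_top
   \<and> ((\<lambda>S. u_alea K (\<lambda>_. S / real K)) \<longlongrightarrow> 1) at_top
   \<and> ((\<lambda>S. u_v K (\<lambda>_. S / real K)) \<longlongrightarrow> 0) at_top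
   \<and> ((\<lambda>S. u_epis K (\<lambda>_. S / real K)) \<longlongrightarrow> 0) at_top
   \<and> (\<forall>\<^sub>F S in at_top. (let \<alpha> = (\<lambda>_. S / real K) in
         u_en K \<alpha> > u_alea K \<alpha> \<and> u_alea K \<alpha> > u_diss K \<alpha> \<and>
         u_diss K \<alpha> > u_v K \<alpha> \<and> u_v K \<alpha> > u_epis K \<alpha>))"
proof -
  note K = assms
  have Kp: "real K > 1" using K by simp
  have K0: "real K > 0" using Kp by simp
  have P1: "\<forall>\<alpha>. (\<forall>k<K. \<alpha> k \<ge> 1) \<longrightarrow> u_v K \<alpha> + u_diss K \<alpha> \<le> 1 \<and> u_v K \<alpha> > u_epis K \<alpha>"
  proof (intro allI impI conjI)
    fix \<alpha> :: "nat \<Rightarrow> real" assume a: "\<forall>k<K. \<alpha> k \<ge> 1"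
    show "u_v K \<alpha> + u_diss K \<alpha> \<le> 1"
      using diss_le[OF K a] belief_sum[OF K a] unfolding u_v_def by linarith
    show "u_v K \<alpha> > u_epis K \<alpha>"
      using gap[OF K a] unfolding u_v_def u_epis_def by linarith
  qed
  have P2: "let \<alpha> = (\<lambda>_. 1::real) in
         1 = u_v K \<alpha> \<and> u_v K \<alpha> = u_en K \<alpha> \<and> u_en K \<alpha> > u_alea K \<alpha> \<and>
         u_alea K \<alpha> > u_epis K \<alpha> \<and> u_epis K \<alpha> > u_diss K \<alpha> \<and> u_diss K \<alpha> = 0"
  proof -
    define \<alpha> where "\<alpha> = (\<lambda>_::nat. 1::real)"
    have a: "\<forall>k<K. \<alpha> k \<ge> 1" by (simp add: \<alpha>_def)
    have S: "Ssum K \<alpha> = real K" by (simp add: Ssum_def \<alpha>_def)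
    have v: "u_v K \<alpha> = 1" unfolding u_v_def S using K0 by simp
    have en: "u_en K \<alpha> = 1" by (rule en_equal[OF K, of _ 1]) (auto simp: \<alpha>_def)
    have al1: "u_alea K \<alpha> < 1" using alea_bounds(2)[OF K a] en by simp
    have "2 * (real K - 1) < (real K + 1) * ln (real K)" using ln_bound2[OF Kp] .
    then have "(real K - 1) / ((real K + 1) * ln (real K)) < 1 / 2"
      using Kp by (simp add: divide_simps mult_ac)
    moreover have "1 - (real K - 1) / ((real K + 1) * ln (real K)) \<le> u_alea K \<alpha>"
      using alea_bounds(1)[OF K a] en S by simp
    ultimately have al2: "u_alea K \<alpha> > 1 / 2" by linarith
    have d: "u_diss K \<alpha> = 0" unfolding u_diss_def belief_def \<alpha>_def Let_def by simp
    show ?thesis unfolding Let_def \<alpha>_def[symmetric] u_epis_def using v en al1 al2 d by simp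
  qed
  have P3: "\<forall>\<alpha>. (\<forall>k<K. \<alpha> k \<ge> 1) \<and> (\<forall>j<K. \<forall>k<K. \<alpha> j = \<alpha> k) \<longrightarrow> u_en K \<alpha> = 1"
  proof (intro allI impI)
    fix \<alpha> :: "nat \<Rightarrow> real" assume h: "(\<forall>k<K. \<alpha> k \<ge> 1) \<and> (\<forall>j<K. \<forall>k<K. \<alpha> j = \<alpha> k)"
    have "0 < K" using K by simp
    then have h1: "\<alpha> 0 \<ge> 1" and h2: "\<forall>k<K. \<alpha> k = \<alpha> 0" using h by blast+
    show "u_en K \<alpha> = 1" by (rule en_equal[OF K h2]) (use h1 in linarith)
  qed
  define A where "A = (\<lambda>x::real. (\<lambda>_::nat. x / real K))"
  have SA: "Ssum K (A x) = x" for x unfolding Ssum_def A_def using K0 by simp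
  have ev: "\<forall>\<^sub>F x in at_top. x > 2 * real K" by (rule eventually_gt_at_top)
  have aA: "\<forall>k<K. A x k \<ge> 1" if "x > 2 * real K" for x
    using that K0 by (simp add: A_def field_simps)
  have vA: "u_v K (A x) = real K / x" for x unfolding u_v_def SA ..
  have enA: "u_en K (A x) = 1" if "x > 2 * real K" for x
    using that K0 by (intro en_equal[OF K, of _ "x / real K"]) (auto simp: A_def)
  have dA: "u_diss K (A x) = 1 - real K / x" if "x > 2 * real K" for x
  proof -
    have "x / real K > 1" using that K0 by (simp add: field_simps)
    then have "u_diss K (A x) = 1 - real K / Ssum K (A x)"
      by (intro diss_equal[OF K]) (auto simp: A_def)
    then show ?thesis unfolding SA .
  qed
  have alA: "1 - real K / x < u_alea K (A x) \<and> u_alea K (A x) < 1" if "x > 2 * real K" for x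
    using gap[OF K aA[OF that]] alea_bounds(2)[OF K aA[OF that]] enA[OF that] SA by simp
  have lim0: "((\<lambda>x. real K / x) \<longlongrightarrow> 0) at_top"
    by (rule tendsto_divide_0[OF tendsto_const filterlim_at_top_imp_at_infinity[OF filterlim_ident]])
  have lim1: "((\<lambda>x. 1 - real K / x) \<longlongrightarrow> 1) at_top"
    using tendsto_diff[OF tendsto_const lim0, of 1] by simp
  have L1: "((\<lambda>S. u_diss K (\<lambda>_. S / real K)) \<longlongrightarrow> 1) at_top"
  proof (rule Lim_transform_eventually[OF lim1])
    show "\<forall>\<^sub>F x in at_top. 1 - real K / x = u_diss K (\<lambda>_. x / real K)"
      using ev by eventually_elim (simp add: dA[unfolded A_def])
  qed
  have L2: "((\<lambda>S. u_alea K (\<lambda>_. S / real K)) \<longlongrightarrow> 1) at_top"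
  proof (rule tendsto_sandwich[OF _ _ lim1 tendsto_const])
    show "\<forall>\<^sub>F x in at_top. 1 - real K / x \<le> u_alea K (\<lambda>_. x / real K)"
      using ev by eventually_elim (use alA[unfolded A_def] in force)
    show "\<forall>\<^sub>F x in at_top. u_alea K (\<lambda>_. x / real K) \<le> 1"
      using ev by eventually_elim (use alA[unfolded A_def] in force)
  qed
  have L3: "((\<lambda>S. u_v K (\<lambda>_. S / real K)) \<longlongrightarrow> 0) at_top"
    using lim0 vA[unfolded A_def] by simp
  have L4: "((\<lambda>S. u_epis K (\<lambda>_. S / real K)) \<longlongrightarrow> 0) at_top"
  proof (rule Lim_transform_eventually)
    show "((\<lambda>x. 1 - u_alea K (\<lambda>_. x / real K)) \<longlongrightarrow> 0) at_top"
      using tendsto_diff[OF tendsto_const L2, of 1] by simp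
    show "\<forall>\<^sub>F x in at_top. 1 - u_alea K (\<lambda>_. x / real K) = u_epis K (\<lambda>_. x / real K)"
      using ev by eventually_elim (simp add: u_epis_def enA[unfolded A_def])
  qed
  have E: "\<forall>\<^sub>F S in at_top. (let \<alpha> = (\<lambda>_. S / real K) in
         u_en K \<alpha> > u_alea K \<alpha> \<and> u_alea K \<alpha> > u_diss K \<alpha> \<and>
         u_diss K \<alpha> > u_v K \<alpha> \<and> u_v K \<alpha> > u_epis K \<alpha>)"
    using ev
  proof eventually_elim
    case (elim x)
    have a: "\<forall>k<K. A x k \<ge> 1" using aA[OF elim] .
    have "real K / x < 1 / 2" using elim K0 by (simp add: field_simps)
    then have "u_diss K (A x) > u_v K (A x)" unfolding dA[OF elim] vA[of x] by linarith
    moreover have "u_v K (A x) > u_epis K (A x)" using P1 a by blast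
    moreover have Ax: "(\<lambda>_::nat. x / real K) = A x" by (simp add: A_def)
    ultimately show ?case unfolding Let_def Ax
      using enA[OF elim] alA[OF elim] dA[OF elim] by simp
  qed
  show ?thesis using P1 P2 P3 L1 L2 L3 L4 E by blast
qed



end
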